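(* Let $d\ge2$, $n\ge1$, let $H$ be a Hermitian operator on $(\mathbb{C}^d)^{\otimes n}$ and let $O$ be a linear operator with $\|O\|_2=1$. Then $|R_M(H,O)|\le 8d^n\|H\|_\infty\log(e)/e$ (log base 2).
   Context: Let $V=\mathbb{Z}_d\times\mathbb{Z}_d$; for $a=(s,t)\in V$, $P_a=X^sZ^t$ with $X|j\rangle=|j+1\bmod d\rangle$, $Z|j\rangle=e^{2\pi ij/d}|j\rangle$; $P_{\vec a}=\bigotimes_iP_{a_i}$. $\|A\|_2=(d^{-n}\mathrm{Tr}(A^\dagger A))^{1/2}$. For $\|O\|_2=1$, $P_O[\vec a]=d^{-2n}|\mathrm{Tr}(OP_{\vec a})|^2$ and $H[O]=-\sum_{\vec a}P_O[\vec a]\log P_O[\vec a]$. The magic rate is $R_M(H,O)=\frac{d}{dt}H[U_tOU_t^\dagger]\big|_{t=0}$ with $U_t=e^{-itH}$; $\|\cdot\|_\infty$ is the operator norm. *)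

theory Defs
  imports Complex_Main "HOL-Library.FuncSet" "Jordan_Normal_Form.Matrix"
begin

text \<open>Operators on (C^d)^{tensor n} are represented as d^n x d^n complex matrices
  (Jordan_Normal_Form). A basis index j < d^n corresponds to the computational basis
  state |j_0,...,j_{n-1}>, where j_i is the i-th digit of j in base d.\<close>

definition digit :: "nat \<Rightarrow> nat \<Rightarrow> nat \<Rightarrow> nat" where
  "digit d i j = (j div d ^ i) mod d"

definition adj :: "complex mat \<Rightarrow> complex mat" where
  "adj A = mat (dim_col A) (dim_row A) (\<lambda>(i,j). cnj (A $$ (j,i)))"

definition tr :: "complex mat \<Rightarrow> complex" where
  "tr A = (\<Sum>i<dim_row A. A $$ (i,i))"

definition hermitian_mat :: "nat \<Rightarrow> complex mat \<Rightarrow> bool" where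
  "hermitian_mat N A \<longleftrightarrow> A \<in> carrier_mat N N \<and> adj A = A"

definition shiftX :: "nat \<Rightarrow> complex mat" where
  "shiftX d = mat d d (\<lambda>(j,k). if j = (k + 1) mod d then 1 else 0)"

definition clockZ :: "nat \<Rightarrow> complex mat" where
  "clockZ d = mat d d (\<lambda>(j,k). if j = k then exp (2 * pi * \<i> * of_nat j / of_nat d) else 0)"

definition weyl :: "nat \<Rightarrow> nat \<times> nat \<Rightarrow> complex mat" where
  "weyl d a = (shiftX d ^\<^sub>m fst a) * (clockZ d ^\<^sub>m snd a)"

text \<open>Pauli string P_{vec a} = tensor product of P_{a_i}, i < n; its matrix entries
  are the products of the single-qudit entries at the base-d digits.\<close>
definition pauli_string :: "nat \<Rightarrow> nat \<Rightarrow> (nat \<Rightarrow> nat \<times> nat) \<Rightarrow> complex mat" where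
  "pauli_string d n a = mat (d ^ n) (d ^ n)
     (\<lambda>(j,k). \<Prod>i<n. weyl d (a i) $$ (digit d i j, digit d i k))"

definition pauli_indices :: "nat \<Rightarrow> nat \<Rightarrow> (nat \<Rightarrow> nat \<times> nat) set" where
  "pauli_indices d n = PiE {..<n} (\<lambda>_. {..<d} \<times> {..<d})"

definition norm2 :: "nat \<Rightarrow> nat \<Rightarrow> complex mat \<Rightarrow> real" where
  "norm2 d n A = sqrt (Re (tr (adj A * A)) / real d ^ n)"

definition vnorm :: "complex vec \<Rightarrow> real" where
  "vnorm v = sqrt (\<Sum>i<dim_vec v. (cmod (v $ i))\<^sup>2)"

definition opnorm :: "complex mat \<Rightarrow> real" where
  "opnorm A = Sup {vnorm (A *\<^sub>v v) | v. v \<in> carrier_vec (dim_col A) \<and> vnorm v = 1}"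

text \<open>Pauli distribution P_O[a] = d^{-2n} |Tr(O P_a)|^2 and stabilizer entropy
  H[O] = - sum_a P_O[a] log_2 P_O[a] (with 0 log 0 = 0, automatic since ln 0 = 0).\<close>
definition pauli_prob :: "nat \<Rightarrow> nat \<Rightarrow> complex mat \<Rightarrow> (nat \<Rightarrow> nat \<times> nat) \<Rightarrow> real" where
  "pauli_prob d n A a = (cmod (tr (A * pauli_string d n a)))\<^sup>2 / real d ^ (2 * n)"

definition pauli_entropy :: "nat \<Rightarrow> nat \<Rightarrow> complex mat \<Rightarrow> real" where
  "pauli_entropy d n A =
     - (\<Sum>a\<in>pauli_indices d n. pauli_prob d n A a * log 2 (pauli_prob d n A a))"

definition mat_exp :: "complex mat \<Rightarrow> complex mat" where
  "mat_exp A = mat (dim_row A) (dim_col A)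
     (\<lambda>(i,j). \<Sum>k. (A ^\<^sub>m k) $$ (i,j) / of_nat (fact k))"

definition evol :: "complex mat \<Rightarrow> real \<Rightarrow> complex mat" where
  "evol H t = mat_exp ((- \<i> * complex_of_real t) \<cdot>\<^sub>m H)"

end

theory Submission
  imports Defs "HOL-Analysis.Analysis"
begin

lemma shiftX_carrier[simp]: "shiftX d \<in> carrier_mat d d"
  by (simp add: shiftX_def)
lemma clockZ_carrier[simp]: "clockZ d \<in> carrier_mat d d"
  by (simp add: clockZ_def)

lemma mult_entry: "A \<in> carrier_mat n m \<Longrightarrow> B \<in> carrier_mat m k \<Longrightarrow> i < n \<Longrightarrow> j < k \<Longrightarrow>
  (A * B) $$ (i,j) = (\<Sum>l<m. A $$ (i,l) * B $$ (l,j))"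
  by (simp add: scalar_prod_def atLeast0LessThan)

lemma sum_delta_mult: "finite S \<Longrightarrow> (\<Sum>l\<in>S. f l * (if l = a then 1 else 0)) = (if a \<in> S then f a else (0::'a::semiring_1))"
  by (simp add: if_distrib[of "\<lambda>x. f _ * x"] sum.delta cong: if_cong)

lemma shiftX_entry: "x < d \<Longrightarrow> y < d \<Longrightarrow> shiftX d $$ (x,y) = (if x = (y+1) mod d then 1 else 0)"
  by (simp add: shiftX_def)

lemma shiftX_pow:
  assumes "x < d" "y < d"
  shows "(shiftX d ^\<^sub>m s) $$ (x,y) = (if x = (y + s) mod d then 1 else (0::complex))"
  using assms(2)
proof (induct s arbitrary: y)
  case 0
  then show ?case using assms by (simp add: shiftX_def)
next
  case (Suc s)
  have "(shiftX d ^\<^sub>m Suc s) $$ (x,y) = (\<Sum>l<d. (shiftX d ^\<^sub>m s) $$ (x,l) * shiftX d $$ (l,y))"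
    unfolding pow_mat.simps(2) using assms Suc.prems by (intro mult_entry) auto
  also have "\<dots> = (\<Sum>l<d. (if x = (l + s) mod d then 1 else 0) * (if l = (y+1) mod d then 1 else 0))"
    using Suc.prems by (intro sum.cong refl) (auto simp: shiftX_entry Suc.hyps)
  also have "\<dots> = (if x = ((y+1) mod d + s) mod d then 1 else 0)"
    using assms by (subst sum_delta_mult) auto
  also have "((y+1) mod d + s) mod d = (y + Suc s) mod d"
    by (simp add: mod_add_left_eq)
  finally show ?case .
qed

definition om :: "nat \<Rightarrow> nat \<Rightarrow> complex" where
  "om d y = exp (2 * pi * \<i> * of_nat y / of_nat d)"

lemma clockZ_entry: "x < d \<Longrightarrow> y < d \<Longrightarrow> clockZ d $$ (x,y) = (if x = y then om d y else 0)"
  by (simp add: clockZ_def om_def)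

lemma clockZ_pow:
  assumes "x < d" "y < d"
  shows "(clockZ d ^\<^sub>m t) $$ (x,y) = (if x = y then om d y ^ t else 0)"
  using assms(2)
proof (induct t arbitrary: y)
  case 0
  then show ?case using assms by (simp add: clockZ_def)
next
  case (Suc t)
  have "(clockZ d ^\<^sub>m Suc t) $$ (x,y) = (\<Sum>l<d. (clockZ d ^\<^sub>m t) $$ (x,l) * clockZ d $$ (l,y))"
    unfolding pow_mat.simps(2) using assms Suc.prems by (intro mult_entry) auto
  also have "\<dots> = (\<Sum>l<d. (if x = l then om d l ^ t else 0) * (om d y * (if l = y then 1 else 0)))"
    using Suc.prems by (intro sum.cong refl) (auto simp: clockZ_entry Suc.hyps)
  also have "\<dots> = (if x = y then om d y ^ Suc t else 0)"
    using assms Suc by (simp add: mult.assoc[symmetric] sum_delta_mult)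
  finally show ?case .
qed

lemma weyl_entry:
  assumes "x < d" "y < d"
  shows "weyl d (s,t) $$ (x,y) = (if x = (y + s) mod d then om d y ^ t else 0)"
proof -
  have "weyl d (s,t) $$ (x,y) = (\<Sum>l<d. (shiftX d ^\<^sub>m s) $$ (x,l) * (clockZ d ^\<^sub>m t) $$ (l,y))"
    unfolding weyl_def fst_conv snd_conv using assms by (intro mult_entry) auto
  also have "\<dots> = (\<Sum>l<d. (if x = (l + s) mod d then 1 else 0) * (om d y ^ t * (if l = y then 1 else 0)))"
    using assms by (intro sum.cong) (auto simp: shiftX_pow clockZ_pow)
  also have "\<dots> = (if x = (y + s) mod d then om d y ^ t else 0)"
    using assms by (simp add: mult.assoc[symmetric] sum_delta_mult)
  finally show ?thesis .
qed

lemma mod_lt2: "(a::nat) < 2*d \<Longrightarrow> b < d \<Longrightarrow> (a mod d = b \<longleftrightarrow> a = b \<or> a = b + d)"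
proof (cases "a < d")
  case True then show ?thesis by auto
next
  case False
  assume "a < 2*d" "b < d"
  then have "a mod d = a - d" using False by (simp add: le_mod_geq)
  then show ?thesis using False \<open>b < d\<close> by auto
qed

lemma mod_solve:
  assumes "x < d" "y < d" "(s::nat) < d"
  shows "x = (y + s) mod d \<longleftrightarrow> s = (x + d - y) mod d"
proof -
  have A: "x = (y + s) mod d \<longleftrightarrow> y + s = x \<or> y + s = x + d"
    using mod_lt2[of "y+s" d x] assms by auto
  have B: "s = (x + d - y) mod d \<longleftrightarrow> x + d - y = s \<or> x + d - y = s + d"
    using mod_lt2[of "x + d - y" d s] assms by auto
  have C: "(y + s = x \<or> y + s = x + d) \<longleftrightarrow> (x + d - y = s \<or> x + d - y = s + d)"
    using assms by arith
  show ?thesis using A B C by blast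
qed

lemma om_alt: "om d y = exp (\<i> * complex_of_real (2 * pi * real y / real d))"
  unfolding om_def by (simp add: mult_ac)

lemma om_pow_d: "d > 0 \<Longrightarrow> om d y ^ d = 1"
proof -
  assume "d > 0"
  have "om d y ^ d = exp (of_nat d * (2 * pi * \<i> * of_nat y / of_nat d))"
    unfolding om_def by (simp only: exp_of_nat_mult)
  also have "of_nat d * (2 * pi * \<i> * of_nat y / of_nat d) = of_nat y * (2 * of_real pi * \<i>)"
    using \<open>d > 0\<close> by (simp add: field_simps)
  also have "exp (of_nat y * (2 * of_real pi * \<i>)) = 1"
    by (simp add: exp_of_nat_mult)
  finally show ?thesis .
qed

lemma om_norm: "cmod (om d y) = 1"
  unfolding om_alt by (rule norm_exp_i_times)

lemma om_geom:
  assumes "y < d" "y' < d"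
  shows "(\<Sum>t<d. cnj (om d y) ^ t * om d y' ^ t) = (if y = y' then of_nat d else 0)"
proof -
  have d0: "d > 0" using assms by auto
  define r where "r = cnj (om d y) * om d y'"
  have sum_eq: "(\<Sum>t<d. cnj (om d y) ^ t * om d y' ^ t) = (\<Sum>t<d. r ^ t)"
    by (simp add: r_def power_mult_distrib)
  show ?thesis
  proof (cases "y = y'")
    case True
    have "r = 1" unfolding r_def True using om_norm[of d y']
      by (metis complex_norm_square mult.commute of_real_1 power_one)
    then show ?thesis using sum_eq True by simp
  next
    case False
    have rd: "r ^ d = 1" unfolding r_def power_mult_distrib
      by (simp add: om_pow_d[OF d0] flip: complex_cnj_power)
    have "r = exp (\<i> * complex_of_real (2 * pi * real y' / real d - 2 * pi * real y / real d))"
      unfolding r_def om_alt exp_cnj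
      by (simp add: exp_add[symmetric] algebra_simps)
    moreover have "exp (\<i> * complex_of_real (2 * pi * real y' / real d - 2 * pi * real y / real d)) \<noteq> 1"
    proof
      assume "exp (\<i> * complex_of_real (2 * pi * real y' / real d - 2 * pi * real y / real d)) = 1"
      then obtain k :: int where k: "2 * pi * real y' / real d - 2 * pi * real y / real d = of_int (2 * k) * pi"
        unfolding exp_eq_1 by auto
      then have E: "pi * (real y' * 2) = pi * (real y * 2) + pi * (real_of_int k * (real d * 2))"
        using d0 by (simp add: field_simps)
      have "pi * (2 * (real y' - real y - real d * of_int k)) = 0"
        using E by (simp add: algebra_simps)
      then have "real y' - real y = real d * of_int k" by simp
      moreover have "\<bar>real y' - real y\<bar> < real d" using assms by auto
      ultimately have "real d * \<bar>of_int k\<bar> < real d * 1"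
        by (simp add: abs_mult)
      then have "\<bar>of_int k\<bar> < (1::real)" using d0
        by (simp only: mult_less_cancel_left_pos of_nat_0_less_iff)
      then have "k = 0" by linarith
      then show False using \<open>real y' - real y = real d * of_int k\<close> False by simp
    qed
    ultimately have "r \<noteq> 1" by simp
    then show ?thesis using sum_eq False rd by (simp add: sum_gp_strict)
  qed
qed

lemma weyl_complete:
  assumes "x < d" "y < d" "x' < d" "y' < d"
  shows "(\<Sum>st\<in>{..<d}\<times>{..<d}. cnj (weyl d st $$ (x,y)) * weyl d st $$ (x',y'))
     = (if x = x' \<and> y = y' then of_nat d else 0)"
proof -
  have "(\<Sum>st\<in>{..<d}\<times>{..<d}. cnj (weyl d st $$ (x,y)) * weyl d st $$ (x',y'))
      = (\<Sum>s<d. \<Sum>t<d. cnj (weyl d (s,t) $$ (x,y)) * weyl d (s,t) $$ (x',y'))"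
    by (simp add: sum.cartesian_product)
  also have "\<dots> = (\<Sum>s<d. if x = (y + s) mod d \<and> x' = (y' + s) mod d then
        (\<Sum>t<d. cnj (om d y) ^ t * om d y' ^ t) else 0)"
    using assms by (intro sum.cong refl) (auto simp: weyl_entry power_mult_distrib)
  also have "\<dots> = (\<Sum>s<d. if x = (y + s) mod d \<and> x' = (y' + s) mod d then
        (if y = y' then of_nat d else 0) else 0)"
    using assms by (intro sum.cong refl) (simp add: om_geom)
  also have "\<dots> = (if x = x' \<and> y = y' then of_nat d else 0)"
  proof (cases "x = x' \<and> y = y'")
    case True
    have "(\<Sum>s<d. if x = (y + s) mod d \<and> x' = (y' + s) mod d then
        (if y = y' then of_nat d else 0) else 0) = (\<Sum>s<d. if s = (x + d - y) mod d then of_nat d else (0::complex))"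
      using True assms by (intro sum.cong refl) (simp add: mod_solve)
    also have "\<dots> = of_nat d" using assms by (simp add: sum.delta)
    finally show ?thesis using True by simp
  next
    case False
    then show ?thesis by (auto intro!: sum.neutral)
  qed
  finally show ?thesis .
qed

lemma digit_lt: "d > 0 \<Longrightarrow> digit d i m < d"
  by (simp add: digit_def)

lemma digit_0: "digit d 0 m = m mod d" by (simp add: digit_def)
lemma digit_Suc: "digit d (Suc i) m = digit d i (m div d)"
  by (simp add: digit_def div_mult2_eq mult.commute)

lemma digit_inj:
  assumes "d > 0" "m < d ^ n" "m' < d ^ n" "\<forall>i<n. digit d i m = digit d i m'"
  shows "m = m'"
  using assms(2-4)
proof (induct n arbitrary: m m')
  case 0 then show ?case by simp
next
  case (Suc n)
  have "m div d < d ^ n" "m' div d < d ^ n" using Suc.prems assms(1)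
    by (auto simp: less_mult_imp_div_less mult.commute)
  moreover have "\<forall>i<n. digit d i (m div d) = digit d i (m' div d)"
    using Suc.prems(3) by (auto simp flip: digit_Suc)
  ultimately have "m div d = m' div d" using Suc.hyps by blast
  moreover have "m mod d = m' mod d" using Suc.prems(3) by (metis digit_0 zero_less_Suc)
  ultimately show ?case by (metis div_mod_decomp)
qed

lemma prod_if_const:
  assumes "finite I"
  shows "(\<Prod>i\<in>I. if P i then c else (0::'a::comm_semiring_1)) = (if (\<forall>i\<in>I. P i) then c ^ card I else 0)"
proof (cases "\<forall>i\<in>I. P i")
  case True then show ?thesis by simp
next
  case False
  then obtain i where "i \<in> I" "\<not> P i" by auto
  then show ?thesis using assms False by (intro trans[OF prod_zero]) auto
qed

definition PE :: "nat \<Rightarrow> nat \<Rightarrow> (nat \<Rightarrow> nat \<times> nat) \<Rightarrow> nat \<Rightarrow> nat \<Rightarrow> complex" where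
  "PE d n a m j = (\<Prod>i<n. weyl d (a i) $$ (digit d i m, digit d i j))"

lemma pauli_entry: "m < d^n \<Longrightarrow> j < d^n \<Longrightarrow> pauli_string d n a $$ (m,j) = PE d n a m j"
  by (simp add: pauli_string_def PE_def)

lemma pauli_complete:
  assumes "d > 0" "m < d^n" "j < d^n" "m' < d^n" "j' < d^n"
  shows "(\<Sum>a\<in>pauli_indices d n. cnj (PE d n a m j) * PE d n a m' j')
       = (if m = m' \<and> j = j' then of_nat (d^n) else 0)"
proof -
  have "(\<Sum>a\<in>pauli_indices d n. cnj (PE d n a m j) * PE d n a m' j')
      = (\<Sum>a\<in>pauli_indices d n. \<Prod>i<n. cnj (weyl d (a i) $$ (digit d i m, digit d i j)) * weyl d (a i) $$ (digit d i m', digit d i j'))"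
    by (simp add: PE_def prod.distrib)
  also have "\<dots> = (\<Prod>i<n. \<Sum>st\<in>{..<d}\<times>{..<d}. cnj (weyl d st $$ (digit d i m, digit d i j)) * weyl d st $$ (digit d i m', digit d i j'))"
    unfolding pauli_indices_def by (subst prod_sum_PiE) auto
  also have "\<dots> = (\<Prod>i<n. if digit d i m = digit d i m' \<and> digit d i j = digit d i j' then of_nat d else 0)"
    using assms(1) by (intro prod.cong refl weyl_complete) (auto simp: digit_lt)
  also have "\<dots> = (if \<forall>i\<in>{..<n}. digit d i m = digit d i m' \<and> digit d i j = digit d i j' then of_nat d ^ n else 0)"
    by (subst prod_if_const) auto
  also have "(\<forall>i\<in>{..<n}. digit d i m = digit d i m' \<and> digit d i j = digit d i j') \<longleftrightarrow> m = m' \<and> j = j'"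
    using digit_inj[OF assms(1) assms(2,4)] digit_inj[OF assms(1) assms(3,5)] by auto
  finally show ?thesis by simp
qed

definition coefP :: "nat \<Rightarrow> nat \<Rightarrow> (nat \<Rightarrow> nat \<Rightarrow> complex) \<Rightarrow> (nat \<Rightarrow> nat \<times> nat) \<Rightarrow> complex" where
  "coefP d n M a = (\<Sum>j<d^n. \<Sum>m<d^n. M j m * PE d n a m j)"

lemma tr_coefP:
  assumes "A \<in> carrier_mat (d^n) (d^n)"
  shows "tr (A * pauli_string d n a) = coefP d n (\<lambda>j m. A $$ (j,m)) a"
proof -
  have ps: "pauli_string d n a \<in> carrier_mat (d^n) (d^n)" by (simp add: pauli_string_def)
  show ?thesis
    unfolding tr_def coefP_def
  proof (rule sum.cong)
    show "{..<dim_row (A * pauli_string d n a)} = {..<d^n}" using assms by simp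
    fix j assume "j \<in> {..<d^n}"
    then show "(A * pauli_string d n a) $$ (j, j) = (\<Sum>m<d ^ n. A $$ (j, m) * PE d n a m j)"
      using \<open>j \<in> {..<d^n}\<close> by (simp add: mult_entry[OF assms ps] pauli_entry)
  qed
qed

lemma parseval:
  assumes "d > 0"
  shows "(\<Sum>a\<in>pauli_indices d n. cnj (coefP d n M a) * coefP d n N a)
      = of_nat (d^n) * (\<Sum>j<d^n. \<Sum>m<d^n. cnj (M j m) * N j m)"
proof -
  let ?I = "pauli_indices d n"
  let ?D = "d^n"
  have "(\<Sum>a\<in>?I. cnj (coefP d n M a) * coefP d n N a)
     = (\<Sum>a\<in>?I. \<Sum>j<?D. \<Sum>m<?D. \<Sum>j'<?D. \<Sum>m'<?D. cnj (M j' m' * PE d n a m' j') * (N j m * PE d n a m j))"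
    unfolding coefP_def by (simp add: sum_distrib_left sum_distrib_right)
  also have "\<dots> = (\<Sum>j<?D. \<Sum>m<?D. \<Sum>j'<?D. \<Sum>m'<?D. \<Sum>a\<in>?I. cnj (M j' m' * PE d n a m' j') * (N j m * PE d n a m j))"
    by (simp only: sum.swap[of _ ?I])
  also have "\<dots> = (\<Sum>j<?D. \<Sum>m<?D. \<Sum>j'<?D. \<Sum>m'<?D. cnj (M j' m') * N j m * (\<Sum>a\<in>?I. cnj (PE d n a m' j') * PE d n a m j))"
    by (simp add: sum_distrib_left mult_ac)
  also have "\<dots> = (\<Sum>j<?D. \<Sum>m<?D. \<Sum>j'<?D. \<Sum>m'<?D. cnj (M j' m') * N j m * (if m' = m \<and> j' = j then of_nat ?D else 0))"
    using assms by (intro sum.cong refl) (simp add: pauli_complete)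
  also have "\<dots> = (\<Sum>j<?D. \<Sum>m<?D. of_nat ?D * (cnj (M j m) * N j m))"
  proof (intro sum.cong refl)
    fix j m assume "j \<in> {..<?D}" "m \<in> {..<?D}"
    have "(\<Sum>j'<?D. \<Sum>m'<?D. cnj (M j' m') * N j m * (if m' = m \<and> j' = j then of_nat ?D else 0))
      = (\<Sum>j'<?D. \<Sum>m'<?D. if j' = j then (if m' = m then cnj (M j' m') * N j m * of_nat ?D else 0) else 0)"
      by (intro sum.cong refl) auto
    also have "\<dots> = (\<Sum>j'<?D. if j' = j then (\<Sum>m'<?D. if m' = m then cnj (M j' m') * N j m * of_nat ?D else 0) else 0)"
      by (intro sum.cong refl) auto
    also have "\<dots> = of_nat ?D * (cnj (M j m) * N j m)"
      using \<open>j \<in> _\<close> \<open>m \<in> _\<close> by (simp add: sum.delta mult_ac)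
    finally show "(\<Sum>j'<?D. \<Sum>m'<?D. cnj (M j' m') * N j m * (if m' = m \<and> j' = j then of_nat ?D else 0))
      = of_nat ?D * (cnj (M j m) * N j m)" .
  qed
  also have "\<dots> = of_nat ?D * (\<Sum>j<?D. \<Sum>m<?D. cnj (M j m) * N j m)"
    by (simp add: sum_distrib_left)
  finally show ?thesis .
qed

definition Ssum :: "nat \<Rightarrow> complex mat \<Rightarrow> real" where
  "Ssum N H = (\<Sum>i<N. \<Sum>j<N. cmod (H $$ (i,j)))"

lemma Ssum_col: "j < N \<Longrightarrow> (\<Sum>l<N. cmod (H $$ (l,j))) \<le> Ssum N H"
  unfolding Ssum_def
  by (intro sum_mono) (rule member_le_sum[of j "{..<N}" "\<lambda>j. cmod (H $$ (_, j))"], auto)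

lemma Ssum_nonneg: "0 \<le> Ssum N H" unfolding Ssum_def by (intro sum_nonneg) auto

lemma pow_bound:
  assumes H: "H \<in> carrier_mat N N" and "i < N" "j < N"
  shows "cmod ((H ^\<^sub>m k) $$ (i,j)) \<le> Ssum N H ^ k"
  using assms(3)
proof (induct k arbitrary: j)
  case 0 then show ?case using assms by simp
next
  case (Suc k)
  have "(H ^\<^sub>m Suc k) $$ (i,j) = (\<Sum>l<N. (H ^\<^sub>m k) $$ (i,l) * H $$ (l,j))"
    unfolding pow_mat.simps(2) using assms Suc.prems by (intro mult_entry) auto
  then have "cmod ((H ^\<^sub>m Suc k) $$ (i,j)) \<le> (\<Sum>l<N. cmod ((H ^\<^sub>m k) $$ (i,l)) * cmod (H $$ (l,j)))"
    by (auto intro!: order.trans[OF norm_sum] simp: norm_mult)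
  also have "\<dots> \<le> (\<Sum>l<N. Ssum N H ^ k * cmod (H $$ (l,j)))"
    using Suc.hyps by (intro sum_mono mult_right_mono) auto
  also have "\<dots> = Ssum N H ^ k * (\<Sum>l<N. cmod (H $$ (l,j)))"
    by (simp add: sum_distrib_left)
  also have "\<dots> \<le> Ssum N H ^ k * Ssum N H"
    using Suc.prems by (intro mult_left_mono Ssum_col) (auto simp: Ssum_nonneg)
  finally show ?case by (simp add: mult.commute)
qed

lemma ac3: "(x::complex) * (a * (c * b)) = c * (x * (a * b))"
  by (simp add: algebra_simps)

lemma smult_pow_entry:
  fixes H :: "complex mat"
  assumes H: "H \<in> carrier_mat N N" and "i < N" "j < N"
  shows "((c \<cdot>\<^sub>m H) ^\<^sub>m k) $$ (i,j) = c ^ k * (H ^\<^sub>m k) $$ (i,j)"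
  using assms(3)
proof (induct k arbitrary: j)
  case 0 then show ?case using assms by simp
next
  case (Suc k)
  have cH: "c \<cdot>\<^sub>m H \<in> carrier_mat N N" using H by simp
  have "((c \<cdot>\<^sub>m H) ^\<^sub>m Suc k) $$ (i,j) = (\<Sum>l<N. ((c \<cdot>\<^sub>m H) ^\<^sub>m k) $$ (i,l) * (c \<cdot>\<^sub>m H) $$ (l,j))"
    unfolding pow_mat.simps(2) using assms Suc.prems cH by (intro mult_entry) auto
  also have "\<dots> = (\<Sum>l<N. c ^ Suc k * ((H ^\<^sub>m k) $$ (i,l) * H $$ (l,j)))"
    using Suc H by (intro sum.cong refl) (subst Suc.hyps, auto simp: mult_ac)
  also have "\<dots> = c ^ Suc k * (H ^\<^sub>m Suc k) $$ (i,j)"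
    unfolding pow_mat.simps(2) using assms Suc.prems 
    by (subst mult_entry[of _ N N _ N]) (auto simp: sum_distrib_left)
  finally show ?case .
qed

definition cf :: "complex mat \<Rightarrow> nat \<Rightarrow> nat \<Rightarrow> nat \<Rightarrow> complex" where
  "cf H i j k = (H ^\<^sub>m k) $$ (i,j) / of_nat (fact k)"

definition Fs :: "complex mat \<Rightarrow> nat \<Rightarrow> nat \<Rightarrow> complex \<Rightarrow> complex" where
  "Fs H i j z = (\<Sum>k. cf H i j k * z ^ k)"

definition Fc :: "complex mat \<Rightarrow> nat \<Rightarrow> nat \<Rightarrow> complex \<Rightarrow> complex" where
  "Fc H i j z = (\<Sum>k. cnj (cf H i j k) * z ^ k)"

lemma summable_cf:
  assumes H: "H \<in> carrier_mat N N" and "i < N" "j < N"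
  shows "summable (\<lambda>k. cf H i j k * z ^ k)" "summable (\<lambda>k. cnj (cf H i j k) * z ^ k)"
proof -
  have b: "norm (cf H i j k * z ^ k) \<le> inverse (fact k) * (Ssum N H * cmod z) ^ k" for k
  proof -
    have "norm (cf H i j k * z ^ k) = cmod ((H ^\<^sub>m k) $$ (i,j)) * cmod z ^ k / fact k"
      by (simp add: cf_def norm_mult norm_divide norm_power)
    also have "\<dots> \<le> Ssum N H ^ k * cmod z ^ k / fact k"
      by (intro divide_right_mono mult_right_mono pow_bound[OF assms]) auto
    finally show ?thesis by (simp add: power_mult_distrib field_simps)
  qed
  have s: "summable (\<lambda>k. inverse (fact k) * (Ssum N H * cmod z) ^ k)"
    by (rule summable_exp)
  show "summable (\<lambda>k. cf H i j k * z ^ k)"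
    by (rule summable_comparison_test[OF _ s]) (use b in auto)
  show "summable (\<lambda>k. cnj (cf H i j k) * z ^ k)"
    by (rule summable_comparison_test[OF _ s]) (use b in \<open>auto simp: norm_mult\<close>)
qed

lemma evol_entry:
  assumes H: "H \<in> carrier_mat N N" and "i < N" "j < N"
  shows "evol H t $$ (i,j) = Fs H i j (- \<i> * complex_of_real t)"
proof -
  have "evol H t $$ (i,j) = (\<Sum>k. (((- \<i> * complex_of_real t) \<cdot>\<^sub>m H) ^\<^sub>m k) $$ (i,j) / of_nat (fact k))"
    using assms by (simp add: evol_def mat_exp_def)
  also have "\<dots> = Fs H i j (- \<i> * complex_of_real t)"
    unfolding Fs_def cf_def
    by (intro arg_cong[where f=suminf] ext) (simp add: smult_pow_entry[OF assms] mult.commute)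
  finally show ?thesis .
qed

lemma evol_carrier: "H \<in> carrier_mat N N \<Longrightarrow> evol H t \<in> carrier_mat N N"
  unfolding evol_def mat_exp_def carrier_mat_def by (simp only: dim_row_mat dim_col_mat index_smult_mat(2,3) mem_Collect_eq)

lemma cnj_Fs:
  assumes H: "H \<in> carrier_mat N N" and "i < N" "j < N"
  shows "cnj (Fs H i j z) = Fc H i j (cnj z)"
proof -
  have "(\<lambda>k. cf H i j k * z ^ k) sums Fs H i j z"
    unfolding Fs_def by (rule summable_sums[OF summable_cf(1)[OF assms]])
  then have "(\<lambda>k. cnj (cf H i j k * z ^ k)) sums cnj (Fs H i j z)"
    by (subst sums_cnj)
  then show ?thesis unfolding Fc_def by (simp add: sums_iff)
qed

lemma pow1: "H \<in> carrier_mat N N \<Longrightarrow> H ^\<^sub>m 1 = H"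
  by (simp add: left_mult_one_mat)

lemma Fs_deriv:
  assumes H: "H \<in> carrier_mat N N" and "i < N" "j < N"
  shows "(Fs H i j has_field_derivative H $$ (i,j)) (at 0)" and "Fs H i j 0 = (if i = j then 1 else 0)"
proof -
  have "(Fs H i j has_field_derivative (\<Sum>k. diffs (cf H i j) k * 0 ^ k)) (at 0)"
    unfolding Fs_def by (rule termdiffs_strong_converges_everywhere) (rule summable_cf[OF assms])
  moreover have "(\<Sum>k. diffs (cf H i j) k * 0 ^ k) = H $$ (i,j)"
    by (simp only: powser_zero) (simp add: diffs_def cf_def pow1[OF H])
  ultimately show "(Fs H i j has_field_derivative H $$ (i,j)) (at 0)" by simp
  show "Fs H i j 0 = (if i = j then 1 else 0)"
    unfolding Fs_def by (simp only: powser_zero) (use assms in \<open>simp add: cf_def\<close>)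
qed

lemma Fc_deriv:
  assumes H: "H \<in> carrier_mat N N" and "i < N" "j < N"
  shows "(Fc H i j has_field_derivative cnj (H $$ (i,j))) (at 0)" and "Fc H i j 0 = (if i = j then 1 else 0)"
proof -
  have "(Fc H i j has_field_derivative (\<Sum>k. diffs (\<lambda>k. cnj (cf H i j k)) k * 0 ^ k)) (at 0)"
    unfolding Fc_def by (rule termdiffs_strong_converges_everywhere) (rule summable_cf[OF assms])
  moreover have "(\<Sum>k. diffs (\<lambda>k. cnj (cf H i j k)) k * 0 ^ k) = cnj (H $$ (i,j))"
    by (simp only: powser_zero) (simp add: diffs_def cf_def pow1[OF H])
  ultimately show "(Fc H i j has_field_derivative cnj (H $$ (i,j))) (at 0)" by simp
  show "Fc H i j 0 = (if i = j then 1 else 0)"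
    unfolding Fc_def by (simp only: powser_zero) (use assms in \<open>simp add: cf_def\<close>)
qed

definition Ez :: "complex mat \<Rightarrow> complex mat \<Rightarrow> nat \<Rightarrow> complex \<Rightarrow> nat \<Rightarrow> nat \<Rightarrow> complex" where
  "Ez H B N z j m = (\<Sum>l<N. \<Sum>k<N. Fs H j k (- \<i> * z) * B $$ (k,l) * Fc H m l (\<i> * z))"

definition Ad :: "complex mat \<Rightarrow> complex mat \<Rightarrow> nat \<Rightarrow> nat \<Rightarrow> nat \<Rightarrow> complex" where
  "Ad H B N j m = - \<i> * (\<Sum>k<N. H $$ (j,k) * B $$ (k,m)) + \<i> * (\<Sum>l<N. B $$ (j,l) * cnj (H $$ (m,l)))"

lemma adj_entry:
  assumes "A \<in> carrier_mat N N" "i < N" "j < N" shows "adj A $$ (i,j) = cnj (A $$ (j,i))"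
proof -
  have "dim_row A = N" "dim_col A = N" using assms(1) by auto
  then show ?thesis using assms(2,3) unfolding adj_def by simp
qed

lemma adj_carrier: "A \<in> carrier_mat N N \<Longrightarrow> adj A \<in> carrier_mat N N"
  unfolding adj_def carrier_mat_def by auto

lemma Ez_entry:
  assumes H: "H \<in> carrier_mat N N" and B: "B \<in> carrier_mat N N" and "j < N" "m < N"
  shows "(evol H t * B * adj (evol H t)) $$ (j,m) = Ez H B N (complex_of_real t) j m"
proof -
  have U: "evol H t \<in> carrier_mat N N" by (rule evol_carrier[OF H])
  have UO: "evol H t * B \<in> carrier_mat N N" using U B by simp
  have "(evol H t * B * adj (evol H t)) $$ (j,m) = (\<Sum>l<N. (evol H t * B) $$ (j,l) * adj (evol H t) $$ (l,m))"
    by (rule mult_entry[OF UO adj_carrier[OF U]]) (use assms in auto)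
  also have "\<dots> = (\<Sum>l<N. (\<Sum>k<N. evol H t $$ (j,k) * B $$ (k,l)) * cnj (evol H t $$ (m,l)))"
    by (intro sum.cong refl) (use assms in \<open>simp add: mult_entry[OF U B] adj_entry[OF U]\<close>)
  also have "\<dots> = Ez H B N (complex_of_real t) j m"
    unfolding Ez_def
  proof (intro sum.cong refl)
    fix l assume l: "l \<in> {..<N}"
    have "cnj (evol H t $$ (m,l)) = Fc H m l (\<i> * complex_of_real t)"
      using assms l by (simp add: evol_entry[OF H] cnj_Fs[OF H])
    then show "(\<Sum>k<N. evol H t $$ (j,k) * B $$ (k,l)) * cnj (evol H t $$ (m,l))
      = (\<Sum>k<N. Fs H j k (- \<i> * complex_of_real t) * B $$ (k,l) * Fc H m l (\<i> * complex_of_real t))"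
      using assms by (simp add: sum_distrib_right evol_entry[OF H])
  qed
  finally show ?thesis .
qed

lemma term_deriv:
  assumes H: "H \<in> carrier_mat N N" and "j < N" "k < N" "m < N" "l < N"
  shows "((\<lambda>z. Fs H j k (- \<i> * z) * c * Fc H m l (\<i> * z)) has_field_derivative
     (H $$ (j,k) * (- \<i>) * c * (if m = l then 1 else 0) + (if j = k then 1 else 0) * c * (cnj (H $$ (m,l)) * \<i>))) (at 0)"
proof -
  have d1: "((\<lambda>z. Fs H j k (- \<i> * z)) has_field_derivative H $$ (j,k) * (- \<i>)) (at 0)"
  proof -
    have "DERIV (Fs H j k) (- \<i> * 0) :> H $$ (j,k)" using Fs_deriv(1)[OF H assms(2,3)] by simp
    from DERIV_chain2[OF this DERIV_cmult_Id] show ?thesis by simp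
  qed
  have d2: "((\<lambda>z. Fc H m l (\<i> * z)) has_field_derivative cnj (H $$ (m,l)) * \<i>) (at 0)"
  proof -
    have "DERIV (Fc H m l) (\<i> * 0) :> cnj (H $$ (m,l))" using Fc_deriv(1)[OF H assms(4,5)] by simp
    from DERIV_chain2[OF this DERIV_cmult_Id] show ?thesis by simp
  qed
  have "((\<lambda>z. Fs H j k (- \<i> * z) * c * Fc H m l (\<i> * z)) has_field_derivative
     (H $$ (j,k) * (- \<i>) * c) * Fc H m l (\<i> * 0) + (cnj (H $$ (m,l)) * \<i>) * (Fs H j k (- \<i> * 0) * c)) (at 0)"
    by (rule DERIV_mult[OF DERIV_cmult_right[OF d1] d2])
  then show ?thesis
    using Fs_deriv(2)[OF H assms(2,3)] Fc_deriv(2)[OF H assms(4,5)] by (simp add: mult_ac)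
qed

lemma Ez_deriv:
  assumes H: "H \<in> carrier_mat N N" and B: "B \<in> carrier_mat N N" and "j < N" "m < N"
  shows "((\<lambda>z. Ez H B N z j m) has_field_derivative Ad H B N j m) (at 0)"
proof -
  have "((\<lambda>z. Ez H B N z j m) has_field_derivative
     (\<Sum>l<N. \<Sum>k<N. H $$ (j,k) * (- \<i>) * B $$ (k,l) * (if m = l then 1 else 0) + (if j = k then 1 else 0) * B $$ (k,l) * (cnj (H $$ (m,l)) * \<i>))) (at 0)"
    unfolding Ez_def using assms
    by (intro DERIV_sum term_deriv[OF H]) auto
  also have "(\<Sum>l<N. \<Sum>k<N. H $$ (j,k) * (- \<i>) * B $$ (k,l) * (if m = l then 1 else 0) + (if j = k then 1 else 0) * B $$ (k,l) * (cnj (H $$ (m,l)) * \<i>))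
    = (\<Sum>l<N. \<Sum>k<N. H $$ (j,k) * (- \<i>) * B $$ (k,l) * (if m = l then 1 else 0)) + (\<Sum>l<N. \<Sum>k<N. (if j = k then 1 else 0) * B $$ (k,l) * (cnj (H $$ (m,l)) * \<i>))"
    by (simp only: sum.distrib)
  also have "(\<Sum>l<N. \<Sum>k<N. H $$ (j,k) * (- \<i>) * B $$ (k,l) * (if m = l then 1 else 0))
     = - \<i> * (\<Sum>k<N. H $$ (j,k) * B $$ (k,m))"
  proof -
    have "(\<Sum>l<N. \<Sum>k<N. H $$ (j,k) * (- \<i>) * B $$ (k,l) * (if m = l then 1 else 0))
       = (\<Sum>l<N. if l = m then (\<Sum>k<N. H $$ (j,k) * (- \<i>) * B $$ (k,l)) else 0)"
      by (intro sum.cong refl) auto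
    also have "\<dots> = (\<Sum>k<N. H $$ (j,k) * (- \<i>) * B $$ (k,m))"
      using assms by (simp add: sum.delta)
    finally show ?thesis by (simp add: sum_distrib_left mult_ac)
  qed
  also have "(\<Sum>l<N. \<Sum>k<N. (if j = k then 1 else 0) * B $$ (k,l) * (cnj (H $$ (m,l)) * \<i>))
     = \<i> * (\<Sum>l<N. B $$ (j,l) * cnj (H $$ (m,l)))"
  proof -
    have "(\<Sum>l<N. \<Sum>k<N. (if j = k then 1 else 0) * B $$ (k,l) * (cnj (H $$ (m,l)) * \<i>))
       = (\<Sum>l<N. \<Sum>k<N. if k = j then B $$ (k,l) * (cnj (H $$ (m,l)) * \<i>) else 0)"
      by (intro sum.cong refl) auto
    also have "\<dots> = (\<Sum>l<N. B $$ (j,l) * (cnj (H $$ (m,l)) * \<i>))"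
      using assms by (simp add: sum.delta)
    finally show ?thesis by (simp add: sum_distrib_left mult_ac)
  qed
  finally show ?thesis unfolding Ad_def .
qed

lemma if_1_mult: "(if P then 1 else 0) * x = (if P then x else (0::'a::semiring_1))" by simp

lemma Ez_zero:
  assumes H: "H \<in> carrier_mat N N" and "j < N" "m < N"
  shows "Ez H B N 0 j m = B $$ (j,m)"
proof -
  have "Ez H B N 0 j m = (\<Sum>l<N. \<Sum>k<N. (if j = k then 1 else 0) * B $$ (k,l) * (if m = l then 1 else 0))"
    unfolding Ez_def using assms
    by (intro sum.cong refl) (simp add: Fs_deriv(2)[OF H] Fc_deriv(2)[OF H])
  also have "\<dots> = (\<Sum>l<N. if l = m then (\<Sum>k<N. if k = j then B $$ (k,l) else 0) else 0)"
    by (intro sum.cong refl) (simp add: if_1_mult sum.delta')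
  also have "\<dots> = B $$ (j,m)" using assms by (simp add: sum.delta)
  finally show ?thesis .
qed

lemma xlnx_bound:
  fixes x :: real
  assumes "0 \<le> x" "x \<le> 1"
  shows "\<bar>x * ln x\<bar> \<le> 4 * x powr (3/4)"
proof (cases "x = 0")
  case True then show ?thesis by simp
next
  case False
  then have x0: "x > 0" using assms by auto
  have "ln (x powr (-1/4)) \<le> x powr (-1/4) - 1"
    by (rule ln_le_minus_one) (use x0 in simp)
  then have "- ln x \<le> 4 * x powr (-1/4)" using x0 by simp
  moreover have "ln x \<le> 0" using x0 assms by simp
  ultimately have m: "x * (- ln x) \<le> x * (4 * x powr (-1/4))"
    using x0 by (intro mult_left_mono) auto
  have "x * ln x \<le> 0" using x0 \<open>ln x \<le> 0\<close> by (simp add: mult_nonneg_nonpos)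
  then have "\<bar>x * ln x\<bar> \<le> x * (4 * x powr (-1/4))" using m by simp
  also have "\<dots> = 4 * (x powr 1 * x powr (-1/4))" using x0 by simp
  also have "x powr 1 * x powr (-1/4) = x powr (1 + (-1/4))" by (rule powr_add[symmetric])
  also have "4 * x powr (1 + (-1/4)) = 4 * x powr (3/4)" by simp
  finally show ?thesis .
qed

lemma xlog_deriv:
  fixes u v :: "real \<Rightarrow> real"
  assumes du: "(u has_real_derivative u') (at 0)" and dv: "(v has_real_derivative v') (at 0)"
  shows "((\<lambda>t. ((u t)\<^sup>2 + (v t)\<^sup>2) * log 2 ((u t)\<^sup>2 + (v t)\<^sup>2)) has_real_derivative
          (2 * (u 0 * u' + v 0 * v')) * (log 2 ((u 0)\<^sup>2 + (v 0)\<^sup>2) + 1 / ln 2)) (at 0)"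
proof -
  define p where "p = (\<lambda>t. (u t)\<^sup>2 + (v t)\<^sup>2)"
  define q where "q = 2 * (u 0 * u' + v 0 * v')"
  have dp: "(p has_real_derivative q) (at 0)"
    unfolding p_def q_def using du dv by (auto intro!: derivative_eq_intros)
  show ?thesis
  proof (cases "p 0 = 0")
    case False
    moreover have "p 0 \<ge> 0" unfolding p_def by simp
    ultimately have p0: "p 0 > 0" by linarith
    have dl: "((\<lambda>t. log 2 (p t)) has_real_derivative (1 / (ln 2 * p 0)) * q) (at 0)"
      by (rule DERIV_chain2[OF DERIV_log[OF p0] dp])
    have "((\<lambda>t. p t * log 2 (p t)) has_real_derivative q * log 2 (p 0) + (1 / (ln 2 * p 0)) * q * p 0) (at 0)"
      by (rule DERIV_mult[OF dp dl])
    moreover have "q * log 2 (p 0) + (1 / (ln 2 * p 0)) * q * p 0 = q * (log 2 (p 0) + 1 / ln 2)"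
      using p0 by (simp add: field_simps)
    ultimately show ?thesis unfolding p_def q_def by simp
  next
    case True
    then have u0: "u 0 = 0" and v0: "v 0 = 0" unfolding p_def by (auto simp: add_nonneg_eq_0_iff)
    have lu: "((\<lambda>t. u t / t) \<longlongrightarrow> u') (at 0)"
      using du u0 unfolding has_field_derivative_iff by simp
    have lv: "((\<lambda>t. v t / t) \<longlongrightarrow> v') (at 0)"
      using dv v0 unfolding has_field_derivative_iff by simp
    define Ku where "Ku = \<bar>u'\<bar> + 1"
    define Kv where "Kv = \<bar>v'\<bar> + 1"
    define C where "C = Ku\<^sup>2 + Kv\<^sup>2"
    have ev1: "\<forall>\<^sub>F t in at 0. \<bar>u t / t\<bar> \<le> Ku"
    proof -
      have "\<forall>\<^sub>F t in at 0. dist (u t / t) u' < 1" using lu by (rule tendstoD) simp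
      then show ?thesis unfolding Ku_def dist_real_def by eventually_elim linarith
    qed
    have ev2: "\<forall>\<^sub>F t in at 0. \<bar>v t / t\<bar> \<le> Kv"
    proof -
      have "\<forall>\<^sub>F t in at 0. dist (v t / t) v' < 1" using lv by (rule tendstoD) simp
      then show ?thesis unfolding Kv_def dist_real_def by eventually_elim linarith
    qed
    have pc: "(p \<longlongrightarrow> 0) (at 0)"
      using DERIV_isCont[OF dp] True unfolding isCont_def by simp
    have ev3: "\<forall>\<^sub>F t in at 0. p t < 1"
      using pc by (rule order_tendstoD) simp
    have ev4: "\<forall>\<^sub>F t in at 0. t \<noteq> 0" by (simp add: eventually_at_filter)
    have bnd: "\<forall>\<^sub>F t in at 0. norm ((p t * log 2 (p t) - p 0 * log 2 (p 0)) / (t - 0))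
        \<le> (4 * C powr (3/4) / ln 2) * sqrt \<bar>t\<bar>"
      using ev1 ev2 ev3 ev4
    proof eventually_elim
      case (elim t)
      have pt0: "0 \<le> p t" unfolding p_def by simp
      have "\<bar>u t\<bar> \<le> Ku * \<bar>t\<bar>" using elim by (simp add: abs_divide divide_le_eq)
      then have "(u t)\<^sup>2 \<le> (Ku * \<bar>t\<bar>)\<^sup>2" by (metis abs_ge_zero power2_abs power_mono)
      moreover have "\<bar>v t\<bar> \<le> Kv * \<bar>t\<bar>" using elim by (simp add: abs_divide divide_le_eq)
      then have "(v t)\<^sup>2 \<le> (Kv * \<bar>t\<bar>)\<^sup>2" by (metis abs_ge_zero power2_abs power_mono)
      ultimately have pC: "p t \<le> C * t\<^sup>2" unfolding p_def C_def by (simp add: power_mult_distrib algebra_simps)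
      have C0: "0 \<le> C" unfolding C_def by simp
      have "norm ((p t * log 2 (p t) - p 0 * log 2 (p 0)) / (t - 0)) = \<bar>p t * ln (p t)\<bar> / ln 2 / \<bar>t\<bar>"
        using True by (simp add: log_def abs_divide abs_mult)
      also have "\<dots> \<le> 4 * p t powr (3/4) / ln 2 / \<bar>t\<bar>"
        using xlnx_bound[OF pt0] elim by (intro divide_right_mono) auto
      also have "\<dots> \<le> 4 * (C * t\<^sup>2) powr (3/4) / ln 2 / \<bar>t\<bar>"
        using pC pt0 by (intro divide_right_mono mult_left_mono powr_mono2) auto
      also have "(C * t\<^sup>2) powr (3/4) = C powr (3/4) * (\<bar>t\<bar> * sqrt \<bar>t\<bar>)"
      proof -
        have "\<bar>t\<bar> powr 2 = \<bar>t\<bar> ^ 2" by (rule powr_numeral) (use elim in simp)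
        then have "(t\<^sup>2) powr (3/4) = (\<bar>t\<bar> powr 2) powr (3/4)" by (simp only: power2_abs)
        also have "\<dots> = \<bar>t\<bar> powr (2 * (3/4))" by (rule powr_powr)
        also have "\<dots> = \<bar>t\<bar> powr (1 + 1/2)" by simp
        also have "\<dots> = \<bar>t\<bar> powr 1 * \<bar>t\<bar> powr (1/2)" by (simp only: powr_add)
        also have "\<dots> = \<bar>t\<bar> * sqrt \<bar>t\<bar>" by (simp add: powr_half_sqrt)
        finally show ?thesis using C0 by (simp add: powr_mult)
      qed
      also have "4 * (C powr (3/4) * (\<bar>t\<bar> * sqrt \<bar>t\<bar>)) / ln 2 / \<bar>t\<bar> = (4 * C powr (3/4) / ln 2) * sqrt \<bar>t\<bar>"
        using elim by (simp add: field_simps)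
      finally show ?case .
    qed
    have lim0: "((\<lambda>t. (4 * C powr (3/4) / ln 2) * sqrt \<bar>t\<bar>) \<longlongrightarrow> 0) (at (0::real))"
    proof -
      have "((\<lambda>t. (4 * C powr (3/4) / ln 2) * sqrt \<bar>t\<bar>) \<longlongrightarrow> (4 * C powr (3/4) / ln 2) * sqrt \<bar>0\<bar>) (at (0::real))"
        by (intro tendsto_intros)
      then show ?thesis by simp
    qed
    have "((\<lambda>t. (p t * log 2 (p t) - p 0 * log 2 (p 0)) / (t - 0)) \<longlongrightarrow> 0) (at 0)"
      by (rule Lim_null_comparison[OF bnd lim0])
    then have "((\<lambda>t. p t * log 2 (p t)) has_real_derivative 0) (at 0)"
      unfolding has_field_derivative_iff .
    then show ?thesis unfolding p_def using u0 v0 by simp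
  qed
qed

lemma matvec_entry: "A \<in> carrier_mat N N \<Longrightarrow> v \<in> carrier_vec N \<Longrightarrow> j < N \<Longrightarrow>
   vec_index (A *\<^sub>v v) j = (\<Sum>k<N. A $$ (j,k) * vec_index v k)"
  by (simp add: scalar_prod_def atLeast0LessThan)

lemma vnorm_sq: "v \<in> carrier_vec N \<Longrightarrow> (vnorm v)\<^sup>2 = (\<Sum>i<N. (cmod (vec_index v i))\<^sup>2)"
  unfolding vnorm_def by (simp add: sum_nonneg carrier_vecD)

lemma vnorm_nonneg: "0 \<le> vnorm v" unfolding vnorm_def by (simp add: sum_nonneg)

lemma vnorm_entry: "v \<in> carrier_vec N \<Longrightarrow> k < N \<Longrightarrow> cmod (vec_index v k) \<le> vnorm v"
proof -
  assume v: "v \<in> carrier_vec N" and k: "k < N"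
  have "(cmod (vec_index v k))\<^sup>2 \<le> (\<Sum>i<N. (cmod (vec_index v i))\<^sup>2)"
    using k by (intro member_le_sum[of k "{..<N}" "\<lambda>i. (cmod (vec_index v i))\<^sup>2"]) auto
  then show ?thesis using vnorm_sq[OF v] vnorm_nonneg[of v]
    by (metis abs_le_square_iff abs_norm_cancel abs_of_nonneg)
qed

lemma opnorm_bdd:
  assumes H: "H \<in> carrier_mat N N"
  shows "bdd_above {vnorm (H *\<^sub>v v) | v. v \<in> carrier_vec (dim_col H) \<and> vnorm v = 1}"
proof -
  define B where "B = sqrt (\<Sum>j<N. (\<Sum>k<N. cmod (H $$ (j,k)))\<^sup>2)"
  have "vnorm (H *\<^sub>v v) \<le> B" if v: "v \<in> carrier_vec N" "vnorm v = 1" for v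
  proof -
    have "cmod (vec_index (H *\<^sub>v v) j) \<le> (\<Sum>k<N. cmod (H $$ (j,k)))" if j: "j < N" for j
    proof -
      have "cmod (vec_index (H *\<^sub>v v) j) \<le> (\<Sum>k<N. cmod (H $$ (j,k)) * cmod (vec_index v k))"
        using matvec_entry[OF H v(1) j] by (auto intro!: order.trans[OF norm_sum] simp: norm_mult)
      also have "\<dots> \<le> (\<Sum>k<N. cmod (H $$ (j,k)) * 1)"
        using vnorm_entry[OF v(1)] v(2) by (intro sum_mono mult_left_mono) auto
      finally show ?thesis by simp
    qed
    then have "(\<Sum>j<N. (cmod (vec_index (H *\<^sub>v v) j))\<^sup>2) \<le> (\<Sum>j<N. (\<Sum>k<N. cmod (H $$ (j,k)))\<^sup>2)"
      by (intro sum_mono power_mono) auto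
    then show ?thesis unfolding B_def vnorm_def using H by (auto intro: real_sqrt_le_mono)
  qed
  then show ?thesis using H unfolding bdd_above_def by auto
qed

lemma opnorm_le:
  assumes H: "H \<in> carrier_mat N N" and v: "v \<in> carrier_vec N"
  shows "vnorm (H *\<^sub>v v) \<le> opnorm H * vnorm v"
proof (cases "vnorm v = 0")
  case True
  then have "(\<Sum>i<N. (cmod (vec_index v i))\<^sup>2) = 0" using vnorm_sq[OF v] by simp
  then have "\<forall>i\<in>{..<N}. (cmod (vec_index v i))\<^sup>2 = 0" by (subst sum_nonneg_eq_0_iff[symmetric]) auto
  then have "\<forall>k<N. vec_index v k = 0" by auto
  then have "\<forall>j<N. vec_index (H *\<^sub>v v) j = 0" using matvec_entry[OF H v] by simp
  then have "vnorm (H *\<^sub>v v) = 0" unfolding vnorm_def using H by simp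
  then show ?thesis using True by simp
next
  case False
  define r where "r = vnorm v"
  have r0: "r > 0" using False vnorm_nonneg[of v] unfolding r_def by auto
  define w where "w = Matrix.vec N (\<lambda>k. vec_index v k / r)"
  have w: "w \<in> carrier_vec N" unfolding w_def by simp
  have "(vnorm w)\<^sup>2 = (\<Sum>i<N. (cmod (vec_index v i))\<^sup>2) / r\<^sup>2"
    unfolding vnorm_sq[OF w] unfolding w_def by (simp add: norm_divide power_divide sum_divide_distrib)
  also have "\<dots> = 1" using vnorm_sq[OF v] r0 unfolding r_def by (simp flip: vnorm_sq[OF v])
  finally have w1: "vnorm w = 1" using vnorm_nonneg[of w] by (simp add: power2_eq_1_iff)
  have Hw: "vec_index (H *\<^sub>v w) j = vec_index (H *\<^sub>v v) j / r" if "j < N" for j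
    unfolding matvec_entry[OF H w that] matvec_entry[OF H v that]
    using that by (simp add: w_def sum_divide_distrib)
  have Hwc: "H *\<^sub>v w \<in> carrier_vec N" using H w by simp
  have Hvc: "H *\<^sub>v v \<in> carrier_vec N" using H v by simp
  have "(vnorm (H *\<^sub>v w))\<^sup>2 = (\<Sum>j<N. (cmod (vec_index (H *\<^sub>v w) j))\<^sup>2)" by (rule vnorm_sq[OF Hwc])
  also have "\<dots> = (\<Sum>j<N. (cmod (vec_index (H *\<^sub>v v) j))\<^sup>2 / r\<^sup>2)"
    by (intro sum.cong refl) (simp add: Hw norm_divide power_divide)
  also have "\<dots> = (\<Sum>j<N. (cmod (vec_index (H *\<^sub>v v) j))\<^sup>2) / r\<^sup>2" by (simp add: sum_divide_distrib)
  also have "\<dots> = (vnorm (H *\<^sub>v v) / r)\<^sup>2" using vnorm_sq[OF Hvc] by (simp add: power_divide)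
  finally have eq: "vnorm (H *\<^sub>v w) = vnorm (H *\<^sub>v v) / r"
    using vnorm_nonneg r0 by (metis divide_nonneg_pos power2_eq_iff_nonneg)
  have "vnorm (H *\<^sub>v w) \<in> {vnorm (H *\<^sub>v v) | v. v \<in> carrier_vec (dim_col H) \<and> vnorm v = 1}"
    using w w1 H by auto
  then have "vnorm (H *\<^sub>v w) \<le> opnorm H"
    unfolding opnorm_def by (rule cSup_upper[OF _ opnorm_bdd[OF H]])
  then have "vnorm (H *\<^sub>v v) / r \<le> opnorm H" using eq by simp
  then show ?thesis using r0 unfolding r_def by (simp add: divide_le_eq mult.commute)
qed

lemma frob_left:
  assumes H: "H \<in> carrier_mat N N" and B: "B \<in> carrier_mat N N"
  shows "(\<Sum>j<N. \<Sum>m<N. (cmod (\<Sum>k<N. H $$ (j,k) * B $$ (k,m)))\<^sup>2)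
     \<le> (opnorm H)\<^sup>2 * (\<Sum>j<N. \<Sum>m<N. (cmod (B $$ (j,m)))\<^sup>2)"
proof -
  have col: "(\<Sum>j<N. (cmod (\<Sum>k<N. H $$ (j,k) * B $$ (k,m)))\<^sup>2) \<le> (opnorm H)\<^sup>2 * (\<Sum>j<N. (cmod (B $$ (j,m)))\<^sup>2)"
    if m: "m < N" for m
  proof -
    define v where "v = Matrix.vec N (\<lambda>k. B $$ (k,m))"
    have v: "v \<in> carrier_vec N" unfolding v_def by simp
    have "(\<Sum>j<N. (cmod (\<Sum>k<N. H $$ (j,k) * B $$ (k,m)))\<^sup>2) = (vnorm (H *\<^sub>v v))\<^sup>2"
      unfolding vnorm_sq[OF mult_mat_vec_carrier[OF H v]]
      by (intro sum.cong refl) (subst matvec_entry[OF H v], auto simp: v_def)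
    also have "\<dots> \<le> (opnorm H * vnorm v)\<^sup>2"
      using opnorm_le[OF H v] vnorm_nonneg by (intro power_mono) auto
    also have "\<dots> = (opnorm H)\<^sup>2 * (\<Sum>j<N. (cmod (B $$ (j,m)))\<^sup>2)"
      unfolding power_mult_distrib vnorm_sq[OF v] by (simp add: v_def)
    finally show ?thesis .
  qed
  have "(\<Sum>j<N. \<Sum>m<N. (cmod (\<Sum>k<N. H $$ (j,k) * B $$ (k,m)))\<^sup>2)
      = (\<Sum>m<N. \<Sum>j<N. (cmod (\<Sum>k<N. H $$ (j,k) * B $$ (k,m)))\<^sup>2)" by (rule sum.swap)
  also have "\<dots> \<le> (\<Sum>m<N. (opnorm H)\<^sup>2 * (\<Sum>j<N. (cmod (B $$ (j,m)))\<^sup>2))"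
    using col by (intro sum_mono) auto
  also have "\<dots> = (opnorm H)\<^sup>2 * (\<Sum>m<N. \<Sum>j<N. (cmod (B $$ (j,m)))\<^sup>2)"
    by (simp add: sum_distrib_left)
  also have "(\<Sum>m<N. \<Sum>j<N. (cmod (B $$ (j,m)))\<^sup>2) = (\<Sum>j<N. \<Sum>m<N. (cmod (B $$ (j,m)))\<^sup>2)"
    by (rule sum.swap)
  finally show ?thesis .
qed

lemma frob_right:
  assumes H: "H \<in> carrier_mat N N" and B: "B \<in> carrier_mat N N"
  shows "(\<Sum>j<N. \<Sum>m<N. (cmod (\<Sum>l<N. B $$ (j,l) * cnj (H $$ (m,l))))\<^sup>2)
     \<le> (opnorm H)\<^sup>2 * (\<Sum>j<N. \<Sum>m<N. (cmod (B $$ (j,m)))\<^sup>2)"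
proof -
  have row: "(\<Sum>m<N. (cmod (\<Sum>l<N. B $$ (j,l) * cnj (H $$ (m,l))))\<^sup>2) \<le> (opnorm H)\<^sup>2 * (\<Sum>m<N. (cmod (B $$ (j,m)))\<^sup>2)"
    if j: "j < N" for j
  proof -
    define v where "v = Matrix.vec N (\<lambda>l. cnj (B $$ (j,l)))"
    have v: "v \<in> carrier_vec N" unfolding v_def by simp
    have e: "cmod (\<Sum>l<N. B $$ (j,l) * cnj (H $$ (m,l))) = cmod (vec_index (H *\<^sub>v v) m)" if "m < N" for m
    proof -
      have "cmod (\<Sum>l<N. B $$ (j,l) * cnj (H $$ (m,l))) = cmod (cnj (\<Sum>l<N. B $$ (j,l) * cnj (H $$ (m,l))))"
        by (rule complex_mod_cnj[symmetric])
      also have "cnj (\<Sum>l<N. B $$ (j,l) * cnj (H $$ (m,l))) = vec_index (H *\<^sub>v v) m"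
        using that by (subst matvec_entry[OF H v], auto simp: v_def mult.commute)
      finally show ?thesis .
    qed
    have "(\<Sum>m<N. (cmod (\<Sum>l<N. B $$ (j,l) * cnj (H $$ (m,l))))\<^sup>2) = (vnorm (H *\<^sub>v v))\<^sup>2"
      unfolding vnorm_sq[OF mult_mat_vec_carrier[OF H v]]
      by (intro sum.cong refl) (simp add: e)
    also have "\<dots> \<le> (opnorm H * vnorm v)\<^sup>2"
      using opnorm_le[OF H v] vnorm_nonneg by (intro power_mono) auto
    also have "\<dots> = (opnorm H)\<^sup>2 * (\<Sum>m<N. (cmod (B $$ (j,m)))\<^sup>2)"
      unfolding power_mult_distrib vnorm_sq[OF v] by (simp add: v_def)
    finally show ?thesis .
  qed
  have "(\<Sum>j<N. \<Sum>m<N. (cmod (\<Sum>l<N. B $$ (j,l) * cnj (H $$ (m,l))))\<^sup>2)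
     \<le> (\<Sum>j<N. (opnorm H)\<^sup>2 * (\<Sum>m<N. (cmod (B $$ (j,m)))\<^sup>2))"
    using row by (intro sum_mono) auto
  also have "\<dots> = (opnorm H)\<^sup>2 * (\<Sum>j<N. \<Sum>m<N. (cmod (B $$ (j,m)))\<^sup>2)"
    by (simp add: sum_distrib_left)
  finally show ?thesis .
qed

lemma herm_entry:
  assumes "H \<in> carrier_mat N N" "adj H = H" "j < N" "k < N"
  shows "cnj (H $$ (j,k)) = H $$ (k,j)"
  using adj_entry[OF assms(1) assms(4,3)] assms(2) by simp

lemma S1_real:
  assumes H: "H \<in> carrier_mat N N" "adj H = H"
  shows "cnj (\<Sum>j<N. \<Sum>m<N. cnj (B $$ (j,m)) * (\<Sum>k<N. H $$ (j,k) * B $$ (k,m)))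
       = (\<Sum>j<N. \<Sum>m<N. cnj (B $$ (j,m)) * (\<Sum>k<N. H $$ (j,k) * B $$ (k,m)))"
proof -
  have "cnj (\<Sum>j<N. \<Sum>m<N. cnj (B $$ (j,m)) * (\<Sum>k<N. H $$ (j,k) * B $$ (k,m)))
      = (\<Sum>j<N. \<Sum>m<N. \<Sum>k<N. B $$ (j,m) * H $$ (k,j) * cnj (B $$ (k,m)))"
    using H by (simp add: sum_distrib_left herm_entry mult_ac)
  also have "\<dots> = (\<Sum>j<N. \<Sum>k<N. \<Sum>m<N. B $$ (j,m) * H $$ (k,j) * cnj (B $$ (k,m)))"
    by (rule sum.cong[OF refl], rule sum.swap)
  also have "\<dots> = (\<Sum>k<N. \<Sum>j<N. \<Sum>m<N. B $$ (j,m) * H $$ (k,j) * cnj (B $$ (k,m)))"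
    by (rule sum.swap)
  also have "\<dots> = (\<Sum>k<N. \<Sum>m<N. \<Sum>j<N. B $$ (j,m) * H $$ (k,j) * cnj (B $$ (k,m)))"
    by (rule sum.cong[OF refl], rule sum.swap)
  also have "\<dots> = (\<Sum>j<N. \<Sum>m<N. cnj (B $$ (j,m)) * (\<Sum>k<N. H $$ (j,k) * B $$ (k,m)))"
    by (simp add: sum_distrib_left mult_ac)
  finally show ?thesis .
qed

lemma S2_real:
  assumes H: "H \<in> carrier_mat N N" "adj H = H"
  shows "cnj (\<Sum>j<N. \<Sum>m<N. cnj (B $$ (j,m)) * (\<Sum>l<N. B $$ (j,l) * cnj (H $$ (m,l))))
       = (\<Sum>j<N. \<Sum>m<N. cnj (B $$ (j,m)) * (\<Sum>l<N. B $$ (j,l) * cnj (H $$ (m,l))))"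
proof -
  have "cnj (\<Sum>j<N. \<Sum>m<N. cnj (B $$ (j,m)) * (\<Sum>l<N. B $$ (j,l) * cnj (H $$ (m,l))))
      = (\<Sum>j<N. \<Sum>m<N. \<Sum>l<N. B $$ (j,m) * cnj (B $$ (j,l)) * H $$ (m,l))"
    using H by (simp add: sum_distrib_left mult_ac)
  also have "\<dots> = (\<Sum>j<N. \<Sum>l<N. \<Sum>m<N. B $$ (j,m) * cnj (B $$ (j,l)) * H $$ (m,l))"
    by (rule sum.cong[OF refl], rule sum.swap)
  also have "\<dots> = (\<Sum>j<N. \<Sum>m<N. cnj (B $$ (j,m)) * (\<Sum>l<N. B $$ (j,l) * cnj (H $$ (m,l))))"
    using H by (intro sum.cong refl) (simp add: sum_distrib_left herm_entry mult_ac)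
  finally show ?thesis .
qed

lemma real_of_cnj_eq: "cnj z = z \<Longrightarrow> Im z = 0"
  by (metis cnj.simps(2) complex_cnj_cancel_iff neg_equal_zero)

lemma Re_S_zero:
  assumes H: "H \<in> carrier_mat N N" "adj H = H"
  shows "Re (\<Sum>j<N. \<Sum>m<N. cnj (B $$ (j,m)) * Ad H B N j m) = 0"
proof -
  define S1 where "S1 = (\<Sum>j<N. \<Sum>m<N. cnj (B $$ (j,m)) * (\<Sum>k<N. H $$ (j,k) * B $$ (k,m)))"
  define S2 where "S2 = (\<Sum>j<N. \<Sum>m<N. cnj (B $$ (j,m)) * (\<Sum>l<N. B $$ (j,l) * cnj (H $$ (m,l))))"
  have "(\<Sum>j<N. \<Sum>m<N. cnj (B $$ (j,m)) * Ad H B N j m) = - \<i> * S1 + \<i> * S2"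
    unfolding S1_def S2_def Ad_def by (simp add: algebra_simps sum.distrib sum_distrib_left)
  moreover have "Im S1 = 0" unfolding S1_def by (rule real_of_cnj_eq[OF S1_real[OF H]])
  moreover have "Im S2 = 0" unfolding S2_def by (rule real_of_cnj_eq[OF S2_real[OF H]])
  ultimately show ?thesis by simp
qed

lemma xlnx_le: "0 < (x::real) \<Longrightarrow> x \<le> 1 \<Longrightarrow> x * \<bar>ln x\<bar> \<le> 1 / exp 1"
proof -
  assume x: "0 < x" "x \<le> 1"
  have "ln (1/x / exp 1) \<le> 1/x / exp 1 - 1" by (rule ln_le_minus_one) (use x in simp)
  moreover have "ln (1/x / exp 1) = - ln x - 1" using x by (simp add: ln_div ln_mult)
  ultimately have "- ln x \<le> 1 / (x * exp 1)" by simp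
  then have "x * (- ln x) \<le> x * (1 / (x * exp 1))" using x by (intro mult_left_mono) auto
  moreover have "ln x \<le> 0" using x by simp
  ultimately show ?thesis using x by (simp add: abs_of_nonpos)
qed

lemma term_bound:
  fixes c0 c1 :: complex and Dr :: real
  assumes "Dr > 0" "cmod c0 \<le> Dr"
  shows "\<bar>2 * Re (cnj c0 * c1) / Dr\<^sup>2 * log 2 ((cmod c0)\<^sup>2 / Dr\<^sup>2)\<bar> \<le> 4 * (cmod c1 / Dr) * (1 / (exp 1 * ln 2))"
proof (cases "c0 = 0")
  case True then show ?thesis using assms by simp
next
  case False
  define x where "x = cmod c0 / Dr"
  have x0: "0 < x" "x \<le> 1" unfolding x_def using assms False by auto
  have lg: "log 2 ((cmod c0)\<^sup>2 / Dr\<^sup>2) = 2 * ln x / ln 2"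
    unfolding x_def log_def using x0 assms False by (simp add: power_divide[symmetric] ln_realpow)
  have re: "\<bar>Re (cnj c0 * c1)\<bar> \<le> cmod c0 * cmod c1"
    using abs_Re_le_cmod[of "cnj c0 * c1"] by (simp add: norm_mult)
  have ab: "\<bar>2 * r / Dr\<^sup>2 * (2 * ln x / ln 2)\<bar> = 4 * \<bar>r\<bar> / Dr\<^sup>2 * \<bar>ln x\<bar> / ln 2" for r
    using assms by (simp add: abs_mult abs_divide)
  have "\<bar>2 * Re (cnj c0 * c1) / Dr\<^sup>2 * log 2 ((cmod c0)\<^sup>2 / Dr\<^sup>2)\<bar>
      = 4 * \<bar>Re (cnj c0 * c1)\<bar> / Dr\<^sup>2 * \<bar>ln x\<bar> / ln 2"
    unfolding lg by (rule ab)
  also have "\<dots> \<le> 4 * (cmod c0 * cmod c1) / Dr\<^sup>2 * \<bar>ln x\<bar> / ln 2"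
    using re assms by (intro divide_right_mono mult_right_mono) auto
  also have "\<dots> = 4 * (cmod c1 / Dr) * (x * \<bar>ln x\<bar>) / ln 2"
    unfolding x_def using assms by (simp add: power2_eq_square field_simps)
  also have "\<dots> \<le> 4 * (cmod c1 / Dr) * (1 / exp 1) / ln 2"
    using xlnx_le[OF x0] assms by (intro divide_right_mono mult_left_mono) auto
  finally show ?thesis by simp
qed

lemma sum_cmod_CS:
  assumes "finite I"
  shows "(\<Sum>a\<in>I. cmod (g a)) \<le> sqrt (real (card I)) * sqrt (\<Sum>a\<in>I. (cmod (g a))\<^sup>2)"
proof -
  have "(\<Sum>a\<in>I. cmod (g a) * 1)\<^sup>2 \<le> (\<Sum>a\<in>I. (cmod (g a))\<^sup>2) * (\<Sum>a\<in>I. 1\<^sup>2)"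
    by (rule Cauchy_Schwarz_ineq_sum)
  then have "(\<Sum>a\<in>I. cmod (g a))\<^sup>2 \<le> real (card I) * (\<Sum>a\<in>I. (cmod (g a))\<^sup>2)" by (simp add: mult.commute)
  then have "sqrt ((\<Sum>a\<in>I. cmod (g a))\<^sup>2) \<le> sqrt (real (card I) * (\<Sum>a\<in>I. (cmod (g a))\<^sup>2))"
    by (rule real_sqrt_le_mono)
  then show ?thesis by (simp add: real_sqrt_mult sum_nonneg)
qed

lemma card_pauli: "card (pauli_indices d n) = (d * d) ^ n"
  unfolding pauli_indices_def by (simp add: card_PiE)

lemma finite_pauli: "finite (pauli_indices d n)"
  unfolding pauli_indices_def by (simp add: finite_PiE)

lemma coefP_cong: "(\<And>j m. j < d^n \<Longrightarrow> m < d^n \<Longrightarrow> M j m = M' j m) \<Longrightarrow> coefP d n M a = coefP d n M' a"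
  unfolding coefP_def by (intro sum.cong refl) auto

lemma parseval_sq:
  assumes "d > 0"
  shows "(\<Sum>a\<in>pauli_indices d n. (cmod (coefP d n X a))\<^sup>2) = real d ^ n * (\<Sum>j<d^n. \<Sum>m<d^n. (cmod (X j m))\<^sup>2)"
proof -
  have "complex_of_real (\<Sum>a\<in>pauli_indices d n. (cmod (coefP d n X a))\<^sup>2)
      = (\<Sum>a\<in>pauli_indices d n. coefP d n X a * cnj (coefP d n X a))"
    by (simp only: of_real_sum complex_norm_square)
  also have "\<dots> = (\<Sum>a\<in>pauli_indices d n. cnj (coefP d n X a) * coefP d n X a)"
    by (simp add: mult.commute)
  also have "\<dots> = of_nat (d^n) * (\<Sum>j<d^n. \<Sum>m<d^n. cnj (X j m) * X j m)"
    by (rule parseval[OF assms])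
  also have "\<dots> = of_nat (d^n) * (\<Sum>j<d^n. \<Sum>m<d^n. X j m * cnj (X j m))"
    by (simp add: mult.commute)
  also have "\<dots> = complex_of_real (real d ^ n * (\<Sum>j<d^n. \<Sum>m<d^n. (cmod (X j m))\<^sup>2))"
  proof -
    have "(\<Sum>j<d^n. \<Sum>m<d^n. X j m * cnj (X j m)) = complex_of_real (\<Sum>j<d^n. \<Sum>m<d^n. (cmod (X j m))\<^sup>2)"
      by (simp only: of_real_sum complex_norm_square)
    then show ?thesis by simp
  qed
  finally show ?thesis by (simp only: of_real_eq_iff)
qed

lemma coef_sum_bound:
  assumes "d > 0"
  shows "(\<Sum>a\<in>pauli_indices d n. cmod (coefP d n X a)) \<le> real d ^ n * sqrt (real d ^ n * (\<Sum>j<d^n. \<Sum>m<d^n. (cmod (X j m))\<^sup>2))"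
proof -
  have "(\<Sum>a\<in>pauli_indices d n. cmod (coefP d n X a))
     \<le> sqrt (real (card (pauli_indices d n))) * sqrt (\<Sum>a\<in>pauli_indices d n. (cmod (coefP d n X a))\<^sup>2)"
    by (rule sum_cmod_CS[OF finite_pauli])
  also have "sqrt (real (card (pauli_indices d n))) = real d ^ n"
  proof -
    have "real (card (pauli_indices d n)) = (real d ^ n)\<^sup>2"
      unfolding card_pauli by (simp add: power_mult_distrib power2_eq_square)
    then show ?thesis by simp
  qed
  also have "(\<Sum>a\<in>pauli_indices d n. (cmod (coefP d n X a))\<^sup>2) = real d ^ n * (\<Sum>j<d^n. \<Sum>m<d^n. (cmod (X j m))\<^sup>2)"
    by (rule parseval_sq[OF assms])
  finally show ?thesis .
qed

context
  fixes d n :: nat and H Ob :: "complex mat"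
  assumes d2: "d \<ge> 2" and Hc: "H \<in> carrier_mat (d^n) (d^n)" and Hh: "adj H = H"
    and Oc: "Ob \<in> carrier_mat (d^n) (d^n)" and On: "norm2 d n Ob = 1"
begin

lemma d0: "d > 0" using d2 by simp

lemma Dr0: "real d ^ n > 0" using d0 by simp

lemma trace_eq:
  "tr ((evol H t * Ob * adj (evol H t)) * pauli_string d n a) = coefP d n (Ez H Ob (d^n) (complex_of_real t)) a"
proof -
  have U: "evol H t \<in> carrier_mat (d^n) (d^n)" by (rule evol_carrier[OF Hc])
  have M: "evol H t * Ob * adj (evol H t) \<in> carrier_mat (d^n) (d^n)"
    using U Oc adj_carrier[OF U] by simp
  show ?thesis unfolding tr_coefP[OF M]
    by (rule coefP_cong) (rule Ez_entry[OF Hc Oc])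
qed

lemma C_deriv: "((\<lambda>z. coefP d n (Ez H Ob (d^n) z) a) has_field_derivative coefP d n (Ad H Ob (d^n)) a) (at 0)"
  unfolding coefP_def
  by (intro DERIV_sum DERIV_cmult_right Ez_deriv[OF Hc Oc]) auto

lemma C_zero: "coefP d n (Ez H Ob (d^n) 0) a = coefP d n (\<lambda>j m. Ob $$ (j,m)) a"
  by (rule coefP_cong) (rule Ez_zero[OF Hc])

lemma C_vderiv: "((\<lambda>t. coefP d n (Ez H Ob (d^n) (complex_of_real t)) a) has_vector_derivative coefP d n (Ad H Ob (d^n)) a) (at 0)"
proof -
  have "((\<lambda>z. coefP d n (Ez H Ob (d^n) z) a) has_field_derivative coefP d n (Ad H Ob (d^n)) a) (at (of_real 0))"
    using C_deriv by simp
  then show ?thesis by (rule has_vector_derivative_real_field)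
qed

lemma prob_eq:
  "pauli_prob d n (evol H t * Ob * adj (evol H t)) a
     = (Re (coefP d n (Ez H Ob (d^n) (complex_of_real t)) a) / real d ^ n)\<^sup>2
     + (Im (coefP d n (Ez H Ob (d^n) (complex_of_real t)) a) / real d ^ n)\<^sup>2"
  unfolding pauli_prob_def trace_eq cmod_power2
  by (simp add: power_divide add_divide_distrib power_mult power2_eq_square[of "real d ^ n"] mult.commute)

lemma F_eq: "(\<Sum>j<d^n. \<Sum>m<d^n. (cmod (Ob $$ (j,m)))\<^sup>2) = real d ^ n"
proof -
  have A: "adj Ob \<in> carrier_mat (d^n) (d^n)" by (rule adj_carrier[OF Oc])
  have "tr (adj Ob * Ob) = (\<Sum>i<d^n. \<Sum>l<d^n. cnj (Ob $$ (l,i)) * Ob $$ (l,i))"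
    unfolding tr_def
  proof (rule sum.cong)
    show "{..<dim_row (adj Ob * Ob)} = {..<d^n}" using A by simp
    fix i assume i: "i \<in> {..<d^n}"
    have "(adj Ob * Ob) $$ (i,i) = (\<Sum>l<d^n. adj Ob $$ (i,l) * Ob $$ (l,i))"
      using i by (intro mult_entry[OF A Oc]) auto
    also have "\<dots> = (\<Sum>l<d^n. cnj (Ob $$ (l,i)) * Ob $$ (l,i))"
      using i by (intro sum.cong refl) (simp add: adj_entry[OF Oc])
    finally show "(adj Ob * Ob) $$ (i,i) = (\<Sum>l<d^n. cnj (Ob $$ (l,i)) * Ob $$ (l,i))" .
  qed
  also have "\<dots> = complex_of_real (\<Sum>i<d^n. \<Sum>l<d^n. (cmod (Ob $$ (l,i)))\<^sup>2)"
    by (simp only: of_real_sum complex_norm_square mult.commute)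
  also have "(\<Sum>i<d^n. \<Sum>l<d^n. (cmod (Ob $$ (l,i)))\<^sup>2) = (\<Sum>j<d^n. \<Sum>m<d^n. (cmod (Ob $$ (j,m)))\<^sup>2)"
    by (rule sum.swap)
  finally have tr: "Re (tr (adj Ob * Ob)) = (\<Sum>j<d^n. \<Sum>m<d^n. (cmod (Ob $$ (j,m)))\<^sup>2)" by simp
  have "sqrt (Re (tr (adj Ob * Ob)) / real d ^ n) = 1" using On unfolding norm2_def .
  then have "Re (tr (adj Ob * Ob)) / real d ^ n = 1" by (metis real_sqrt_eq_1_iff)
  then show ?thesis using tr Dr0 by (simp add: field_simps)
qed

lemma c0_sq: "(\<Sum>a\<in>pauli_indices d n. (cmod (coefP d n (\<lambda>j m. Ob $$ (j,m)) a))\<^sup>2) = (real d ^ n)\<^sup>2"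
  unfolding parseval_sq[OF d0] F_eq by (simp add: power2_eq_square)

lemma c0_le: "a \<in> pauli_indices d n \<Longrightarrow> cmod (coefP d n (\<lambda>j m. Ob $$ (j,m)) a) \<le> real d ^ n"
proof -
  assume a: "a \<in> pauli_indices d n"
  have "(cmod (coefP d n (\<lambda>j m. Ob $$ (j,m)) a))\<^sup>2 \<le> (\<Sum>a\<in>pauli_indices d n. (cmod (coefP d n (\<lambda>j m. Ob $$ (j,m)) a))\<^sup>2)"
    by (rule member_le_sum[OF a _ finite_pauli]) auto
  then have "(cmod (coefP d n (\<lambda>j m. Ob $$ (j,m)) a))\<^sup>2 \<le> (real d ^ n)\<^sup>2" unfolding c0_sq .
  then show ?thesis using Dr0 by (simp add: power2_le_iff_abs_le)
qed

lemma sum_re_zero: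
  "(\<Sum>a\<in>pauli_indices d n. Re (cnj (coefP d n (\<lambda>j m. Ob $$ (j,m)) a) * coefP d n (Ad H Ob (d^n)) a)) = 0"
proof -
  have "(\<Sum>a\<in>pauli_indices d n. Re (cnj (coefP d n (\<lambda>j m. Ob $$ (j,m)) a) * coefP d n (Ad H Ob (d^n)) a))
     = Re (\<Sum>a\<in>pauli_indices d n. cnj (coefP d n (\<lambda>j m. Ob $$ (j,m)) a) * coefP d n (Ad H Ob (d^n)) a)"
    by simp
  also have "\<dots> = Re (of_nat (d^n) * (\<Sum>j<d^n. \<Sum>m<d^n. cnj (Ob $$ (j,m)) * Ad H Ob (d^n) j m))"
    by (simp only: parseval[OF d0])
  also have "\<dots> = real (d^n) * Re (\<Sum>j<d^n. \<Sum>m<d^n. cnj (Ob $$ (j,m)) * Ad H Ob (d^n) j m)"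
    by simp
  also have "\<dots> = 0" unfolding Re_S_zero[OF Hc Hh] by simp
  finally show ?thesis .
qed

lemma opnorm_nonneg: "0 \<le> opnorm H"
proof -
  define e where "e = Matrix.vec (d^n) (\<lambda>k. if k = 0 then 1 else (0::complex))"
  have e: "e \<in> carrier_vec (d^n)" unfolding e_def by simp
  have "(vnorm e)\<^sup>2 = (\<Sum>i<d^n. (cmod (vec_index e i))\<^sup>2)" by (rule vnorm_sq[OF e])
  also have "\<dots> = (\<Sum>i<d^n. if i = 0 then 1 else 0)"
    by (intro sum.cong refl) (simp add: e_def)
  also have "\<dots> = 1" using d0 by simp
  finally have "vnorm e = 1" using vnorm_nonneg[of e] by (simp add: power2_eq_1_iff)
  then show ?thesis using opnorm_le[OF Hc e] vnorm_nonneg[of "H *\<^sub>v e"] by simp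
qed

lemma coefP_Ad: "coefP d n (Ad H Ob (d^n)) a
  = - \<i> * coefP d n (\<lambda>j m. \<Sum>k<d^n. H $$ (j,k) * Ob $$ (k,m)) a
    + \<i> * coefP d n (\<lambda>j m. \<Sum>l<d^n. Ob $$ (j,l) * cnj (H $$ (m,l))) a"
  unfolding coefP_def Ad_def by (simp add: algebra_simps sum.distrib sum_distrib_left)

lemma frob_sum_bound:
  assumes "(\<Sum>j<d^n. \<Sum>m<d^n. (cmod (X j m))\<^sup>2) \<le> (opnorm H)\<^sup>2 * (\<Sum>j<d^n. \<Sum>m<d^n. (cmod (Ob $$ (j,m)))\<^sup>2)"
  shows "(\<Sum>a\<in>pauli_indices d n. cmod (coefP d n X a)) \<le> (real d ^ n)\<^sup>2 * opnorm H"
proof -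
  have "(\<Sum>a\<in>pauli_indices d n. cmod (coefP d n X a)) \<le> real d ^ n * sqrt (real d ^ n * (\<Sum>j<d^n. \<Sum>m<d^n. (cmod (X j m))\<^sup>2))"
    by (rule coef_sum_bound[OF d0])
  also have "\<dots> \<le> real d ^ n * sqrt (real d ^ n * ((opnorm H)\<^sup>2 * real d ^ n))"
    using assms Dr0 unfolding F_eq by (intro mult_left_mono real_sqrt_le_mono) auto
  also have "sqrt (real d ^ n * ((opnorm H)\<^sup>2 * real d ^ n)) = real d ^ n * opnorm H"
  proof -
    have "real d ^ n * ((opnorm H)\<^sup>2 * real d ^ n) = (real d ^ n * opnorm H)\<^sup>2"
      by (simp add: power2_eq_square)
    then show ?thesis using opnorm_nonneg Dr0 by simp
  qed
  finally show ?thesis by (simp add: power2_eq_square mult_ac)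
qed

lemma sum_c1: "(\<Sum>a\<in>pauli_indices d n. cmod (coefP d n (Ad H Ob (d^n)) a)) \<le> 2 * (real d ^ n)\<^sup>2 * opnorm H"
proof -
  have "(\<Sum>a\<in>pauli_indices d n. cmod (coefP d n (Ad H Ob (d^n)) a))
     \<le> (\<Sum>a\<in>pauli_indices d n. cmod (coefP d n (\<lambda>j m. \<Sum>k<d^n. H $$ (j,k) * Ob $$ (k,m)) a)
                                 + cmod (coefP d n (\<lambda>j m. \<Sum>l<d^n. Ob $$ (j,l) * cnj (H $$ (m,l))) a))"
    unfolding coefP_Ad by (intro sum_mono order.trans[OF norm_triangle_ineq]) (simp add: norm_mult)
  also have "\<dots> = (\<Sum>a\<in>pauli_indices d n. cmod (coefP d n (\<lambda>j m. \<Sum>k<d^n. H $$ (j,k) * Ob $$ (k,m)) a))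
      + (\<Sum>a\<in>pauli_indices d n. cmod (coefP d n (\<lambda>j m. \<Sum>l<d^n. Ob $$ (j,l) * cnj (H $$ (m,l))) a))"
    by (rule sum.distrib)
  also have "\<dots> \<le> (real d ^ n)\<^sup>2 * opnorm H + (real d ^ n)\<^sup>2 * opnorm H"
    by (intro add_mono frob_sum_bound frob_left[OF Hc Oc] frob_right[OF Hc Oc])
  finally show ?thesis by (simp add: mult_ac)
qed

end

theorem mainTheorem17:
  fixes d n :: nat and H Ob :: "complex mat"
  assumes "d \<ge> 2" and "n \<ge> 1"
    and "hermitian_mat (d ^ n) H"
    and "Ob \<in> carrier_mat (d ^ n) (d ^ n)"
    and "norm2 d n Ob = 1"
  shows "\<exists>R. ((\<lambda>t. pauli_entropy d n (evol H t * Ob * adj (evol H t)))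
                 has_real_derivative R) (at 0)
           \<and> \<bar>R\<bar> \<le> 8 * real d ^ n * opnorm H * log 2 (exp 1) / exp 1"
proof -
  have Hc: "H \<in> carrier_mat (d^n) (d^n)" and Hh: "adj H = H"
    using assms(3) unfolding hermitian_mat_def by auto
  note facts = assms(1) Hc Hh assms(4) assms(5)
  define I where "I = pauli_indices d n"
  define Dr where "Dr = real d ^ n"
  have Dr0: "Dr > 0" unfolding Dr_def using Dr0[OF facts] .
  define c0 where "c0 a = coefP d n (\<lambda>j m. Ob $$ (j,m)) a" for a
  define c1 where "c1 a = coefP d n (Ad H Ob (d^n)) a" for a
  define C where "C a t = coefP d n (Ez H Ob (d^n) (complex_of_real t)) a" for a t
  define u where "u a t = Re (C a t) / Dr" for a t
  define v where "v a t = Im (C a t) / Dr" for a t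
  define q where "q a = 2 * Re (cnj (c0 a) * c1 a) / Dr\<^sup>2" for a
  define p where "p a = (cmod (c0 a))\<^sup>2 / Dr\<^sup>2" for a
  have fe: "(\<lambda>t. pauli_entropy d n (evol H t * Ob * adj (evol H t)))
      = (\<lambda>t. - (\<Sum>a\<in>I. ((u a t)\<^sup>2 + (v a t)\<^sup>2) * log 2 ((u a t)\<^sup>2 + (v a t)\<^sup>2)))"
    by (rule ext) (simp add: pauli_entropy_def prob_eq[OF facts] u_def v_def C_def I_def Dr_def)
  have du: "(u a has_real_derivative Re (c1 a) / Dr) (at 0)" for a
    unfolding u_def C_def c1_def by (intro DERIV_cdivide has_field_derivative_Re C_vderiv[OF facts])
  have dv: "(v a has_real_derivative Im (c1 a) / Dr) (at 0)" for a
    unfolding v_def C_def c1_def by (intro DERIV_cdivide has_field_derivative_Im C_vderiv[OF facts])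
  have C0: "C a 0 = c0 a" for a
    unfolding C_def c0_def using C_zero[OF facts] by simp
  have dterm: "((\<lambda>t. ((u a t)\<^sup>2 + (v a t)\<^sup>2) * log 2 ((u a t)\<^sup>2 + (v a t)\<^sup>2))
      has_real_derivative q a * (log 2 (p a) + 1 / ln 2)) (at 0)" for a
  proof -
    have e1: "2 * (u a 0 * (Re (c1 a) / Dr) + v a 0 * (Im (c1 a) / Dr)) = q a"
      unfolding u_def v_def q_def C0 using Dr0 by (simp add: field_simps power2_eq_square)
    have e2: "(u a 0)\<^sup>2 + (v a 0)\<^sup>2 = p a"
      unfolding u_def v_def p_def C0 cmod_power2 by (simp add: power_divide add_divide_distrib)
    show ?thesis using xlog_deriv[OF du dv, of a a] unfolding e1 e2 .
  qed
  have dR: "((\<lambda>t. pauli_entropy d n (evol H t * Ob * adj (evol H t)))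
      has_real_derivative - (\<Sum>a\<in>I. q a * (log 2 (p a) + 1 / ln 2))) (at 0)"
    unfolding fe by (intro DERIV_minus DERIV_sum dterm)
  have sq: "(\<Sum>a\<in>I. q a) = 0"
  proof -
    have "(\<Sum>a\<in>I. q a) = 2 / Dr\<^sup>2 * (\<Sum>a\<in>I. Re (cnj (c0 a) * c1 a))"
      unfolding q_def by (simp add: sum_distrib_left)
    also have "(\<Sum>a\<in>I. Re (cnj (c0 a) * c1 a)) = 0"
      unfolding I_def c0_def c1_def by (rule sum_re_zero[OF facts])
    finally show ?thesis by simp
  qed
  have "\<bar>- (\<Sum>a\<in>I. q a * (log 2 (p a) + 1 / ln 2))\<bar> = \<bar>(\<Sum>a\<in>I. q a * log 2 (p a)) + (\<Sum>a\<in>I. q a) / ln 2\<bar>"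
    by (simp add: algebra_simps sum.distrib sum_divide_distrib)
  also have "\<dots> = \<bar>\<Sum>a\<in>I. q a * log 2 (p a)\<bar>" unfolding sq by simp
  also have "\<dots> \<le> (\<Sum>a\<in>I. \<bar>q a * log 2 (p a)\<bar>)" by (rule sum_abs)
  also have "\<dots> \<le> (\<Sum>a\<in>I. 4 * (cmod (c1 a) / Dr) * (1 / (exp 1 * ln 2)))"
  proof (rule sum_mono)
    fix a assume a: "a \<in> I"
    show "\<bar>q a * log 2 (p a)\<bar> \<le> 4 * (cmod (c1 a) / Dr) * (1 / (exp 1 * ln 2))"
      unfolding q_def p_def
      by (rule term_bound[OF Dr0]) (use c0_le[OF facts] a in \<open>simp add: I_def c0_def Dr_def\<close>)
  qed
  also have "\<dots> = 4 / (Dr * exp 1 * ln 2) * (\<Sum>a\<in>I. cmod (c1 a))"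
    by (simp add: sum_distrib_left sum_divide_distrib mult_ac)
  also have "\<dots> \<le> 4 / (Dr * exp 1 * ln 2) * (2 * Dr\<^sup>2 * opnorm H)"
    using sum_c1[OF facts] Dr0 unfolding I_def c1_def Dr_def
    by (intro mult_left_mono) auto
  also have "\<dots> = 8 * real d ^ n * opnorm H * log 2 (exp 1) / exp 1"
    unfolding Dr_def using Dr0 unfolding Dr_def by (simp add: log_def power2_eq_square field_simps)
  finally show ?thesis using dR by blast
qed

end
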